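(* Let $X$ be a normal topological space and let $f,g,h\colon X\to Y$ be continuous maps. Then $\mathrm{D}(f,h)\leq \mathrm{D}(f,g)+\mathrm{D}(g,h)$.
   Context: For continuous maps $f,g\colon X\to Y$, the homotopic distance $\mathrm{D}(f,g)$ is the least integer $n\geq 0$ such that there is an open cover $\{U_0,\dots,U_n\}$ of $X$ with $f|_{U_j}\simeq g|_{U_j}$ for all $j$; if no such cover exists, $\mathrm{D}(f,g)=\infty$. *)

theory Defs
  imports "HOL-Analysis.Analysis" "HOL-Library.Extended_Nat"
begin

definition hd_cover :: "'a topology \<Rightarrow> 'b topology \<Rightarrow> ('a \<Rightarrow> 'b) \<Rightarrow> ('a \<Rightarrow> 'b) \<Rightarrow> nat \<Rightarrow> bool"
  where "hd_cover X Y f g n \<longleftrightarrow>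
    (\<exists>U :: nat \<Rightarrow> 'a set.
        (\<forall>j\<le>n. openin X (U j)) \<and>
        (\<Union>j\<le>n. U j) = topspace X \<and>
        (\<forall>j\<le>n. homotopic_with (\<lambda>_. True) (subtopology X (U j)) Y f g))"

definition homotopic_distance :: "'a topology \<Rightarrow> 'b topology \<Rightarrow> ('a \<Rightarrow> 'b) \<Rightarrow> ('a \<Rightarrow> 'b) \<Rightarrow> enat"
  where "homotopic_distance X Y f g =
    (if \<exists>n. hd_cover X Y f g n then enat (LEAST n. hd_cover X Y f g n) else \<infinity>)"

end

theory Submission
  imports Defs
begin

lemma glue_homotopic:
  assumes ope: "\<And>i. i \<in> I \<Longrightarrow> openin X (P i)"
    and disj: "\<And>i j. i \<in> I \<Longrightarrow> j \<in> I \<Longrightarrow> i \<noteq> j \<Longrightarrow> P i \<inter> P j = {}"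
    and hom: "\<And>i. i \<in> I \<Longrightarrow> homotopic_with (\<lambda>_. True) (subtopology X (P i)) Y f g"
  shows "homotopic_with (\<lambda>_. True) (subtopology X (\<Union>i\<in>I. P i)) Y f g"
proof -
  let ?U = "\<Union>i\<in>I. P i"
  let ?Z = "prod_topology (top_of_set {0..1::real}) (subtopology X ?U)"
  have "\<forall>i\<in>I. \<exists>H. continuous_map (prod_topology (top_of_set {0..1::real}) (subtopology X (P i))) Y H
      \<and> (\<forall>x. H(0,x) = f x) \<and> (\<forall>x. H(1,x) = g x)"
    using hom unfolding homotopic_with_def by blast
  then obtain H where H: "\<And>i. i \<in> I \<Longrightarrow> continuous_map (prod_topology (top_of_set {0..1::real}) (subtopology X (P i))) Y (H i)"
     "\<And>i x. i \<in> I \<Longrightarrow> H i (0,x) = f x" "\<And>i x. i \<in> I \<Longrightarrow> H i (1,x) = g x"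
    by metis
  obtain K where K: "continuous_map ?Z Y K"
     "\<And>z i. i \<in> I \<Longrightarrow> z \<in> topspace ?Z \<inter> ({0..1} \<times> P i) \<Longrightarrow> K z = H i z"
  proof (rule pasting_lemma_exists[where I=I and T="\<lambda>i. {0..1} \<times> P i" and f=H])
    show "topspace ?Z \<subseteq> (\<Union>i\<in>I. {0..1} \<times> P i)"
      by auto
    fix i assume i: "i \<in> I"
    have sub: "P i \<subseteq> ?U" using i by auto
    show "openin ?Z ({0..1} \<times> P i)"
      unfolding openin_prod_Times_iff
      using ope[OF i] sub by (auto simp: openin_subtopology intro!: exI[of _ "P i"])
    have "subtopology ?Z ({0..1} \<times> P i) = prod_topology (top_of_set {0..1::real}) (subtopology X (P i))"
      using sub by (simp add: subtopology_Times subtopology_subtopology Int_absorb1)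
    then show "continuous_map (subtopology ?Z ({0..1} \<times> P i)) Y (H i)"
      using H(1)[OF i] by simp
  next
    fix i j x assume "i \<in> I" "j \<in> I" "x \<in> topspace ?Z \<inter> ({0..1} \<times> P i) \<inter> ({0..1} \<times> P j)"
    then show "H i x = H j x" using disj by (cases "i = j") auto
  qed auto
  show ?thesis
    unfolding homotopic_with[where P="\<lambda>_. True", simplified]
  proof (intro exI conjI ballI)
    show "continuous_map ?Z Y K" by (rule K(1))
  next
    fix x assume "x \<in> topspace (subtopology X ?U)"
    then obtain i where "i \<in> I" "x \<in> P i" "x \<in> topspace X" by auto
    then show "K (0, x) = f x" "K (1, x) = g x"
      using K(2)[of i "(0,x)"] K(2)[of i "(1,x)"] H by auto
  qed
qed



lemma urysohn_family:
  fixes m :: nat and A :: "nat \<Rightarrow> 'a set"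
  assumes nX: "normal_space X" and ope: "\<And>i. i \<le> m \<Longrightarrow> openin X (A i)"
    and cov: "(\<Union>i\<le>m. A i) = topspace X"
  shows "\<exists>\<phi>. (\<forall>i\<le>m. continuous_map X euclideanreal (\<phi> i) \<and>
            (\<forall>x\<in>topspace X. 0 \<le> \<phi> i x \<and> (0 < \<phi> i x \<longrightarrow> x \<in> A i))) \<and>
          (\<forall>x\<in>topspace X. \<exists>i\<le>m. 0 < \<phi> i x)"
proof -
  have "k \<le> Suc m \<Longrightarrow> \<exists>\<phi>::nat \<Rightarrow> 'a \<Rightarrow> real. (\<forall>i<k. continuous_map X euclideanreal (\<phi> i) \<and>
            (\<forall>x\<in>topspace X. 0 \<le> \<phi> i x \<and> (0 < \<phi> i x \<longrightarrow> x \<in> A i))) \<and>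
          topspace X \<subseteq> (\<Union>i<k. {x\<in>topspace X. 0 < \<phi> i x}) \<union> (\<Union>i\<in>{k..m}. A i)" for k
  proof (induction k)
    case 0
    then show ?case using cov by (auto simp: atLeast0AtMost intro!: exI[of _ "\<lambda>_ _. 0"])
  next
    case (Suc k)
    then have km: "k \<le> m" by simp
    from Suc obtain \<phi> :: "nat \<Rightarrow> 'a \<Rightarrow> real" where
      P: "\<forall>i<k. continuous_map X euclideanreal (\<phi> i) \<and>
            (\<forall>x\<in>topspace X. 0 \<le> \<phi> i x \<and> (0 < \<phi> i x \<longrightarrow> x \<in> A i))"
      and C: "topspace X \<subseteq> (\<Union>i<k. {x\<in>topspace X. 0 < \<phi> i x}) \<union> (\<Union>i\<in>{k..m}. A i)"
      by auto
    define Op where "Op = (\<Union>i<k. {x\<in>topspace X. 0 < \<phi> i x}) \<union> (\<Union>i\<in>{Suc k..m}. A i)"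
    have "openin X Op"
      unfolding Op_def
    proof (intro openin_Un openin_Union ballI)
      fix S assume "S \<in> (\<lambda>i. {x\<in>topspace X. 0 < \<phi> i x}) ` {..<k}"
      then obtain i where "i < k" "S = {x\<in>topspace X. \<phi> i x \<in> {0<..}}" by auto
      then show "openin X S" using P openin_continuous_map_preimage[of X euclideanreal "\<phi> i" "{0<..}"]
        by auto
    next
      fix S assume "S \<in> A ` {Suc k..m}"
      then show "openin X S" using ope by auto
    qed
    then have clF: "closedin X (topspace X - Op)" by (simp add: closedin_diff)
    have FA: "topspace X - Op \<subseteq> A k"
    proof
      fix x assume x: "x \<in> topspace X - Op"
      have xt: "x \<in> topspace X" and xO: "x \<notin> Op" using x by auto
      have n1: "x \<notin> (\<Union>i<k. {x\<in>topspace X. 0 < \<phi> i x})" using xO unfolding Op_def by (rule contrapos_nn) simp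
      have n2: "x \<notin> (\<Union>i\<in>{Suc k..m}. A i)" using xO unfolding Op_def by (rule contrapos_nn) simp
      have "x \<in> (\<Union>i\<in>{k..m}. A i)" using C xt n1 by (meson UnE subsetD)
      then obtain i where i: "i \<in> {k..m}" "x \<in> A i" by (rule UN_E)
      have "i \<notin> {Suc k..m}" using n2 i(2) by (meson UN_I)
      with i have "i = k" by simp
      with i show "x \<in> A k" by simp
    qed
    have clA: "closedin X (topspace X - A k)" using ope[OF km] by (simp add: closedin_diff)
    obtain \<psi> where \<psi>: "continuous_map X (top_of_set {0..1::real}) \<psi>"
      "\<psi> ` (topspace X - A k) \<subseteq> {0}" "\<psi> ` (topspace X - Op) \<subseteq> {1}"
      using Urysohn_lemma[OF nX clA clF, of 0 1] FA by (auto simp: disjnt_def)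
    have \<psi>c: "continuous_map X euclideanreal \<psi>"
      using \<psi>(1) continuous_map_in_subtopology by blast
    have \<psi>r: "\<psi> x \<in> {0..1}" if "x \<in> topspace X" for x
      using \<psi>(1) that by (auto simp: continuous_map_def)
    show ?case
    proof (intro exI[of _ "\<phi>(k:=\<psi>)"] conjI allI impI ballI)
      fix i assume "i < Suc k"
      then show "continuous_map X euclideanreal ((\<phi>(k := \<psi>)) i)"
        using P \<psi>c by (cases "i = k") auto
    next
      fix i x assume "i < Suc k" "x \<in> topspace X"
      then show "0 \<le> (\<phi>(k := \<psi>)) i x" using P \<psi>r by (cases "i = k") auto
    next
      fix i x assume "i < Suc k" "x \<in> topspace X" "0 < (\<phi>(k := \<psi>)) i x"
      then show "x \<in> A i" using P \<psi>(2) by (cases "i = k") force+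
    next
      show "topspace X \<subseteq> (\<Union>i<Suc k. {x \<in> topspace X. 0 < (\<phi>(k := \<psi>)) i x}) \<union> \<Union> (A ` {Suc k..m})"
      proof
        fix x assume x: "x \<in> topspace X"
        show "x \<in> (\<Union>i<Suc k. {x \<in> topspace X. 0 < (\<phi>(k := \<psi>)) i x}) \<union> \<Union> (A ` {Suc k..m})"
        proof (cases "x \<in> Op")
          case True then show ?thesis unfolding Op_def by auto
        next
          case False
          then have "\<psi> x = 1" using \<psi>(3) x by auto
          then show ?thesis using x by auto
        qed
      qed
    qed
  qed
  from this[of "Suc m"] obtain \<phi> :: "nat \<Rightarrow> 'a \<Rightarrow> real" where
    "\<forall>i<Suc m. continuous_map X euclideanreal (\<phi> i) \<and>
            (\<forall>x\<in>topspace X. 0 \<le> \<phi> i x \<and> (0 < \<phi> i x \<longrightarrow> x \<in> A i))"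
    "topspace X \<subseteq> (\<Union>i<Suc m. {x\<in>topspace X. 0 < \<phi> i x})" by auto
  then show ?thesis
  proof (intro exI[of _ \<phi>] conjI ballI)
    fix x assume "x \<in> topspace X"
    then obtain i where "i < Suc m" "0 < \<phi> i x" using \<open>topspace X \<subseteq> _\<close> by blast
    then show "\<exists>i\<le>m. 0 < \<phi> i x" by (auto simp: less_Suc_eq_le)
  qed (auto simp: less_Suc_eq_le)
qed



lemma prod_lt_aux:
  fixes a b M N :: real
  assumes "0 \<le> a" "0 \<le> b" "a \<le> M" "b \<le> N" "0 < M" "0 < N" "a < M \<or> b < N"
  shows "a * b < M * N"
  using assms by (smt (verit) mult_left_mono mult_right_mono mult_strict_left_mono mult_strict_right_mono)

lemma card_pair_eq:
  assumes "finite S'" "finite T'" "S \<subseteq> S'" "T \<subseteq> T'" "card S + card T = card S' + card T'"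
  shows "S = S' \<and> T = T'"
proof -
  have "card S \<le> card S'" "card T \<le> card T'" using assms card_mono by auto
  then have "card S = card S'" "card T = card T'" using assms(5) by auto
  then show ?thesis using assms card_subset_eq by metis
qed

lemma openin_all_pos:
  assumes "finite K" "\<And>q. q \<in> K \<Longrightarrow> continuous_map X euclideanreal (F q)"
  shows "openin X {x\<in>topspace X. \<forall>q\<in>K. 0 < F q x}"
  using assms
proof (induction K rule: finite_induct)
  case empty
  then show ?case by simp
next
  case (insert a K)
  have "{x\<in>topspace X. \<forall>q\<in>insert a K. 0 < F q x} = {x\<in>topspace X. F a x \<in> {0<..}} \<inter> {x\<in>topspace X. \<forall>q\<in>K. 0 < F q x}"
    by auto
  moreover have "openin X {x\<in>topspace X. F a x \<in> {0<..}}"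
    by (rule openin_continuous_map_preimage) (use insert.prems in auto)
  moreover have "openin X {x\<in>topspace X. \<forall>q\<in>K. 0 < F q x}" using insert.IH insert.prems by blast
  ultimately show ?case by (simp add: openin_Int)
qed

lemma combine_covers:
  assumes nX: "normal_space X" and c1: "hd_cover X Y f g m" and c2: "hd_cover X Y g h n"
  shows "hd_cover X Y f h (m + n)"
proof -
  obtain A where Ao: "\<And>i. i \<le> m \<Longrightarrow> openin X (A i)" and Ac: "(\<Union>i\<le>m. A i) = topspace X"
    and Ah: "\<And>i. i \<le> m \<Longrightarrow> homotopic_with (\<lambda>_. True) (subtopology X (A i)) Y f g"
    using c1 unfolding hd_cover_def by blast
  obtain B where Bo: "\<And>j. j \<le> n \<Longrightarrow> openin X (B j)" and Bc: "(\<Union>j\<le>n. B j) = topspace X"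
    and Bh: "\<And>j. j \<le> n \<Longrightarrow> homotopic_with (\<lambda>_. True) (subtopology X (B j)) Y g h"
    using c2 unfolding hd_cover_def by blast
  obtain \<phi> :: "nat \<Rightarrow> 'a \<Rightarrow> real" where
    \<phi>: "\<And>i. i\<le>m \<Longrightarrow> continuous_map X euclideanreal (\<phi> i)"
    "\<And>i x. i\<le>m \<Longrightarrow> x\<in>topspace X \<Longrightarrow> 0 \<le> \<phi> i x"
    "\<And>i x. i\<le>m \<Longrightarrow> x\<in>topspace X \<Longrightarrow> 0 < \<phi> i x \<Longrightarrow> x \<in> A i"
    "\<And>x. x\<in>topspace X \<Longrightarrow> \<exists>i\<le>m. 0 < \<phi> i x"
  proof -
    from urysohn_family[OF nX Ao Ac] obtain u :: "nat \<Rightarrow> 'a \<Rightarrow> real" where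
      u: "\<forall>i\<le>m. continuous_map X euclideanreal (u i) \<and>
            (\<forall>x\<in>topspace X. 0 \<le> u i x \<and> (0 < u i x \<longrightarrow> x \<in> A i))"
         "\<forall>x\<in>topspace X. \<exists>i\<le>m. 0 < u i x" by blast
    show ?thesis by (rule that[of u]) (use u in blast)+
  qed
  obtain \<psi> :: "nat \<Rightarrow> 'a \<Rightarrow> real" where
    \<psi>: "\<And>j. j\<le>n \<Longrightarrow> continuous_map X euclideanreal (\<psi> j)"
    "\<And>j x. j\<le>n \<Longrightarrow> x\<in>topspace X \<Longrightarrow> 0 \<le> \<psi> j x"
    "\<And>j x. j\<le>n \<Longrightarrow> x\<in>topspace X \<Longrightarrow> 0 < \<psi> j x \<Longrightarrow> x \<in> B j"
    "\<And>x. x\<in>topspace X \<Longrightarrow> \<exists>j\<le>n. 0 < \<psi> j x"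
  proof -
    from urysohn_family[OF nX Bo Bc] obtain u :: "nat \<Rightarrow> 'a \<Rightarrow> real" where
      u: "\<forall>i\<le>n. continuous_map X euclideanreal (u i) \<and>
            (\<forall>x\<in>topspace X. 0 \<le> u i x \<and> (0 < u i x \<longrightarrow> x \<in> B i))"
         "\<forall>x\<in>topspace X. \<exists>i\<le>n. 0 < u i x" by blast
    show ?thesis by (rule that[of u]) (use u in blast)+
  qed
  define v where "v i j x = \<phi> i x * \<psi> j x" for i j x
  have vc: "continuous_map X euclideanreal (v i j)" if "i \<le> m" "j \<le> n" for i j
    unfolding v_def[abs_def] using \<phi>(1)[OF that(1)] \<psi>(1)[OF that(2)] by (intro continuous_map_real_mult)
  define Wst where "Wst S T = {x\<in>topspace X. \<forall>q\<in>S\<times>T. 0 < v (fst q) (snd q) x} \<inter>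
      {x\<in>topspace X. \<forall>q\<in>(S\<times>T)\<times>({..m}\<times>{..n} - S\<times>T). 0 < v (fst (fst q)) (snd (fst q)) x - v (fst (snd q)) (snd (snd q)) x}" for S T
  have Wmem: "0 < v i j x" "\<And>i' j'. i' \<le> m \<Longrightarrow> j' \<le> n \<Longrightarrow> (i',j') \<notin> S\<times>T \<Longrightarrow> v i' j' x < v i j x"
    if "x \<in> Wst S T" "i \<in> S" "j \<in> T" for x S T i j
    using that unfolding Wst_def by force+
  have Wts: "Wst S T \<subseteq> topspace X" for S T unfolding Wst_def by auto
  define Idx where "Idx k = {(S,T). S \<subseteq> {..m} \<and> T \<subseteq> {..n} \<and> S \<noteq> {} \<and> T \<noteq> {} \<and> card S + card T = k + 2}" for k
  define W where "W k = (\<Union>p\<in>Idx k. Wst (fst p) (snd p))" for k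
  have Wopen: "openin X (Wst S T)" if "S \<subseteq> {..m}" "T \<subseteq> {..n}" for S T
    unfolding Wst_def
  proof (rule openin_Int)
    have fin: "finite S" "finite T" using that finite_subset by blast+
    show "openin X {x \<in> topspace X. \<forall>q\<in>S \<times> T. 0 < v (fst q) (snd q) x}"
      using fin that by (intro openin_all_pos) (auto intro!: vc)
    show "openin X {x \<in> topspace X. \<forall>q\<in>(S\<times>T)\<times>({..m}\<times>{..n} - S\<times>T). 0 < v (fst (fst q)) (snd (fst q)) x - v (fst (snd q)) (snd (snd q)) x}"
      using fin that by (intro openin_all_pos) (auto intro!: vc continuous_map_diff)
  qed
  show ?thesis
    unfolding hd_cover_def
  proof (intro exI[of _ W] conjI allI impI)
    fix k assume "k \<le> m + n"
    show "openin X (W k)"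
      unfolding W_def by (intro openin_Union) (auto simp: Idx_def intro!: Wopen)
  next
    show "(\<Union>k\<le>m + n. W k) = topspace X"
    proof
      show "(\<Union>k\<le>m + n. W k) \<subseteq> topspace X" unfolding W_def using Wts by blast
    next
      show "topspace X \<subseteq> (\<Union>k\<le>m + n. W k)"
      proof
        fix x assume x: "x \<in> topspace X"
        define M where "M = Max ((\<lambda>i. \<phi> i x) ` {..m})"
        define N where "N = Max ((\<lambda>j. \<psi> j x) ` {..n})"
        define S where "S = {i\<in>{..m}. \<phi> i x = M}"
        define T where "T = {j\<in>{..n}. \<psi> j x = N}"
        have Mge: "\<phi> i x \<le> M" if "i \<le> m" for i unfolding M_def using that by (intro Max_ge) auto
        have Nge: "\<psi> j x \<le> N" if "j \<le> n" for j unfolding N_def using that by (intro Max_ge) auto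
        have "M \<in> (\<lambda>i. \<phi> i x) ` {..m}" unfolding M_def by (intro Max_in) auto
        then have Sne: "S \<noteq> {}" unfolding S_def by auto
        have "N \<in> (\<lambda>j. \<psi> j x) ` {..n}" unfolding N_def by (intro Max_in) auto
        then have Tne: "T \<noteq> {}" unfolding T_def by auto
        have Mpos: "0 < M" using \<phi>(4)[OF x] Mge by force
        have Npos: "0 < N" using \<psi>(4)[OF x] Nge by force
        have Ssub: "S \<subseteq> {..m}" and Tsub: "T \<subseteq> {..n}" unfolding S_def T_def by auto
        have cS: "1 \<le> card S" "card S \<le> m + 1"
          using Sne Ssub card_mono[OF _ Ssub] finite_subset[OF Ssub] by (auto simp: Suc_le_eq card_gt_0_iff)
        have cT: "1 \<le> card T" "card T \<le> n + 1"
          using Tne Tsub card_mono[OF _ Tsub] finite_subset[OF Tsub] by (auto simp: Suc_le_eq card_gt_0_iff)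
        define k where "k = card S + card T - 2"
        have k: "k \<le> m + n" "card S + card T = k + 2" using cS cT unfolding k_def by auto
        have "x \<in> Wst S T"
          unfolding Wst_def
        proof (intro IntI CollectI conjI ballI)
          show "x \<in> topspace X" "x \<in> topspace X" by (fact x, fact x)
        next
          fix q assume "q \<in> S \<times> T"
          then show "0 < v (fst q) (snd q) x" using Mpos Npos by (auto simp: v_def S_def T_def)
        next
          fix q assume q: "q \<in> (S\<times>T)\<times>({..m}\<times>{..n} - S\<times>T)"
          then obtain i j i' j' where qq: "q = ((i,j),(i',j'))" "i \<in> S" "j \<in> T" "i' \<le> m" "j' \<le> n" "(i',j') \<notin> S \<times> T"
            by auto
          have "\<phi> i' x * \<psi> j' x < M * N"
          proof (rule prod_lt_aux)
            have l1: "\<phi> i' x \<le> M" by (rule Mge) (rule qq(4))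
            have l2: "\<psi> j' x \<le> N" by (rule Nge) (rule qq(5))
            show "\<phi> i' x \<le> M" "\<psi> j' x \<le> N" by (fact l1, fact l2)
            show "0 \<le> \<phi> i' x" by (rule \<phi>(2)[OF qq(4) x])
            show "0 \<le> \<psi> j' x" by (rule \<psi>(2)[OF qq(5) x])
            show "0 < M" "0 < N" by (fact Mpos, fact Npos)
            have "i' \<notin> S \<or> j' \<notin> T" using qq(6) by blast
            then have "\<phi> i' x \<noteq> M \<or> \<psi> j' x \<noteq> N" using qq(4,5) unfolding S_def T_def by blast
            then show "\<phi> i' x < M \<or> \<psi> j' x < N" using l1 l2 by linarith
          qed
          moreover have "\<phi> i x = M" using qq(2) unfolding S_def by simp
          moreover have "\<psi> j x = N" using qq(3) unfolding T_def by simp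
          ultimately show "0 < v (fst (fst q)) (snd (fst q)) x - v (fst (snd q)) (snd (snd q)) x"
            by (simp add: v_def qq(1))
        qed
        moreover have "(S,T) \<in> Idx k" unfolding Idx_def using k Ssub Tsub Sne Tne by simp
        ultimately have "x \<in> W k" unfolding W_def by (intro UN_I[where a="(S,T)"]) simp_all
        then show "x \<in> (\<Union>k\<le>m + n. W k)" using k by auto
      qed
    qed
  next
    fix k assume "k \<le> m + n"
    show "homotopic_with (\<lambda>_. True) (subtopology X (W k)) Y f h"
      unfolding W_def
    proof (rule glue_homotopic)
      fix p assume "p \<in> Idx k"
      then obtain S T where p: "p = (S,T)" "S \<subseteq> {..m}" "T \<subseteq> {..n}" "S \<noteq> {}" "T \<noteq> {}"
        unfolding Idx_def by auto
      show "openin X (Wst (fst p) (snd p))" using p Wopen by auto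
      obtain i j where ij: "i \<in> S" "j \<in> T" using p by auto
      have im: "i \<le> m" and jn: "j \<le> n" using ij p by auto
      have sub: "Wst S T \<subseteq> A i \<inter> B j"
      proof
        fix x assume x: "x \<in> Wst S T"
        then have xt: "x \<in> topspace X" using Wts by auto
        have "0 < \<phi> i x * \<psi> j x" using Wmem(1)[OF x ij] by (simp add: v_def)
        moreover have "0 \<le> \<phi> i x" "0 \<le> \<psi> j x" using \<phi>(2)[OF im xt] \<psi>(2)[OF jn xt] .
        ultimately have "0 < \<phi> i x" "0 < \<psi> j x"
          by (auto simp: zero_less_mult_iff)
        then show "x \<in> A i \<inter> B j" using \<phi>(3)[OF im xt] \<psi>(3)[OF jn xt] by auto
      qed
      have "homotopic_with (\<lambda>_. True) (subtopology X (Wst S T)) Y f g"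
        using homotopic_from_subtopology[OF Ah[OF im], of "Wst S T"] sub
        by (simp add: subtopology_subtopology Int_absorb1)
      moreover have "homotopic_with (\<lambda>_. True) (subtopology X (Wst S T)) Y g h"
        using homotopic_from_subtopology[OF Bh[OF jn], of "Wst S T"] sub
        by (simp add: subtopology_subtopology Int_absorb1)
      ultimately have "homotopic_with (\<lambda>_. True) (subtopology X (Wst S T)) Y f h"
        by (rule homotopic_with_trans)
      then show "homotopic_with (\<lambda>_. True) (subtopology X (Wst (fst p) (snd p))) Y f h"
        using p(1) by simp
    next
      fix p p' assume pp: "p \<in> Idx k" "p' \<in> Idx k" "p \<noteq> p'"
      obtain S T where p0: "p = (S,T)" by (cases p)
      obtain S' T' where p0': "p' = (S',T')" by (cases p')
      have p: "p = (S,T)" "S \<subseteq> {..m}" "T \<subseteq> {..n}" "S \<noteq> {}" "T \<noteq> {}"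
        using pp(1) p0 unfolding Idx_def by auto
      have p': "p' = (S',T')" "S' \<subseteq> {..m}" "T' \<subseteq> {..n}" "S' \<noteq> {}" "T' \<noteq> {}"
        using pp(2) p0' unfolding Idx_def by auto
      have cc: "card S + card T = card S' + card T'"
        using pp(1,2) p0 p0' unfolding Idx_def by auto
      show "Wst (fst p) (snd p) \<inter> Wst (fst p') (snd p') = {}"
      proof (rule ccontr)
        assume "Wst (fst p) (snd p) \<inter> Wst (fst p') (snd p') \<noteq> {}"
        then obtain x where x1: "x \<in> Wst S T" and x2: "x \<in> Wst S' T'" using p p' by auto
        have "S \<times> T \<subseteq> S' \<times> T' \<or> S' \<times> T' \<subseteq> S \<times> T"
        proof (rule ccontr)
          assume "\<not> ?thesis"
          then obtain i j i' j' where a: "i \<in> S" "j \<in> T" "(i,j) \<notin> S' \<times> T'"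
            and b: "i' \<in> S'" "j' \<in> T'" "(i',j') \<notin> S \<times> T" by auto
          have "v i' j' x < v i j x" using Wmem(2)[OF x1 a(1,2)] b p' by auto
          moreover have "v i j x < v i' j' x" using Wmem(2)[OF x2 b(1,2)] a p by auto
          ultimately show False by simp
        qed
        moreover have "finite S" "finite T" "finite S'" "finite T'"
          using p p' finite_subset by blast+
        ultimately have "S = S' \<and> T = T'"
          using card_pair_eq[of S' T' S T] card_pair_eq[of S T S' T'] cc p p'
          by (auto simp: times_subset_iff)
        then show False using pp p p' by auto
      qed
    qed
  qed
qed

theorem proposition3p17:
  fixes X :: "'a topology" and Y :: "'b topology" and f g h :: "'a \<Rightarrow> 'b"
  assumes "normal_space X"
    and "continuous_map X Y f" and "continuous_map X Y g" and "continuous_map X Y h"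
  shows "homotopic_distance X Y f h \<le> homotopic_distance X Y f g + homotopic_distance X Y g h"
proof -
  consider (inf) "\<not> (\<exists>n. hd_cover X Y f g n) \<or> \<not> (\<exists>n. hd_cover X Y g h n)"
    | (fin) "\<exists>n. hd_cover X Y f g n" "\<exists>n. hd_cover X Y g h n" by blast
  then show ?thesis
  proof cases
    case inf
    then show ?thesis by (auto simp: homotopic_distance_def)
  next
    case fin
    define m where "m = (LEAST n. hd_cover X Y f g n)"
    define n where "n = (LEAST n. hd_cover X Y g h n)"
    have cm: "hd_cover X Y f g m" unfolding m_def using fin(1) by (rule LeastI_ex)
    have cn: "hd_cover X Y g h n" unfolding n_def using fin(2) by (rule LeastI_ex)
    have c: "hd_cover X Y f h (m + n)" by (rule combine_covers[OF assms(1) cm cn])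
    then have "homotopic_distance X Y f h \<le> enat (m + n)"
      unfolding homotopic_distance_def by (auto intro: Least_le)
    moreover have "homotopic_distance X Y f g + homotopic_distance X Y g h = enat (m + n)"
      using fin unfolding homotopic_distance_def m_def n_def by simp
    ultimately show ?thesis by simp
  qed
qed

end
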